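(* Let $n\ge1$, let $y,z\in C(SU(n+1))$ be given by $y(A)=a_{n+1,1}$ and $z(A)=\overline{a_{n+1,n+1}}$, where $a_{ij}$ denotes the $(i,j)$-entry of $A\in SU(n+1)$, and for $\gamma=(\gamma_1,\gamma_2)\in\mathbb{N}^2$ (with $0\in\mathbb{N}$) let $b^{\gamma}=y^{\gamma_1}z^{\gamma_2}$. Let $\epsilon_1=(1,0)$, $\epsilon_2=(0,1)$ and let $\|\cdot\|$ be the supremum norm. Then (1) $\sup_{\{\gamma:\gamma_1=\gamma_2\}}\|b^\gamma\|/\|b^{\gamma+\epsilon_1+\epsilon_2}\|<\infty$; (2) $\sup_{\{\gamma:\gamma_1\ge\gamma_2\}}\|b^\gamma\|/\|b^{\gamma+\epsilon_1}\|<\infty$; (3) $\sup_{\{\gamma:\gamma_1\le\gamma_2\}}\|b^\gamma\|/\|b^{\gamma+\epsilon_2}\|<\infty$. *)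

theory Defs
  imports "HOL-Analysis.Analysis" "HOL-Combinatorics.Permutations"
begin

text \<open>Matrices of size N x N are represented as functions nat => nat => complex,
  with 0-based indices 0..N-1 and entries zero outside that range.
  The paper's entry a_{ij} (1-based) is A (i-1) (j-1).\<close>

definition mat_det :: "nat \<Rightarrow> (nat \<Rightarrow> nat \<Rightarrow> complex) \<Rightarrow> complex" where
  "mat_det N A = (\<Sum>p | p permutes {..<N}. of_int (sign p) * (\<Prod>i<N. A i (p i)))"

definition SU :: "nat \<Rightarrow> (nat \<Rightarrow> nat \<Rightarrow> complex) set" where
  "SU N = {A. (\<forall>i j. (i \<ge> N \<or> j \<ge> N) \<longrightarrow> A i j = 0)
             \<and> (\<forall>i<N. \<forall>j<N. (\<Sum>k<N. A i k * cnj (A j k)) = (if i = j then 1 else 0))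
             \<and> mat_det N A = 1}"

definition supnorm :: "nat \<Rightarrow> ((nat \<Rightarrow> nat \<Rightarrow> complex) \<Rightarrow> complex) \<Rightarrow> real" where
  "supnorm N f = (SUP A\<in>SU N. cmod (f A))"

definition yfun :: "nat \<Rightarrow> (nat \<Rightarrow> nat \<Rightarrow> complex) \<Rightarrow> complex" where
  "yfun n A = A n 0"

definition zfun :: "nat \<Rightarrow> (nat \<Rightarrow> nat \<Rightarrow> complex) \<Rightarrow> complex" where
  "zfun n A = cnj (A n n)"

definition bmon :: "nat \<Rightarrow> nat \<times> nat \<Rightarrow> (nat \<Rightarrow> nat \<Rightarrow> complex) \<Rightarrow> complex" where
  "bmon n \<gamma> A = yfun n A ^ fst \<gamma> * zfun n A ^ snd \<gamma>"

end

theory Submission imports Defs begin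

definition Rm :: "nat \<Rightarrow> real \<Rightarrow> real \<Rightarrow> nat \<Rightarrow> nat \<Rightarrow> complex" where
 "Rm n s t i j = (if i = n \<and> j = 0 then of_real s else if i = n \<and> j = n then of_real t
   else if i = 0 \<and> j = 0 then of_real t else if i = 0 \<and> j = n then - of_real s
   else if i = j \<and> i < n then 1 else 0)"

lemma Rm_mid: "n \<ge> 1 \<Longrightarrow> k \<in> {1..<n} \<Longrightarrow> Rm n s t i k = (if i = k then 1 else 0)"
  by (auto simp: Rm_def)

lemma Rm_orth:
  assumes n: "n \<ge> 1" and st: "s\<^sup>2 + t\<^sup>2 = 1" and i: "i < n+1" and j: "j < n+1"
  shows "(\<Sum>k<n+1. Rm n s t i k * cnj (Rm n s t j k)) = (if i = j then 1 else 0)"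
proof -
  have U: "{..<n+1} = insert 0 (insert n {1..<n})" using n by auto
  have inner: "(\<Sum>k\<in>{1..<n}. Rm n s t i k * cnj (Rm n s t j k)) = (if i = j \<and> i \<in> {1..<n} then 1 else 0)"
  proof -
    have "(\<Sum>k\<in>{1..<n}. Rm n s t i k * cnj (Rm n s t j k)) = (\<Sum>k\<in>{1..<n}. if k = i \<and> i = j then 1 else 0)"
      by (rule sum.cong) (auto simp: Rm_mid n)
    also have "\<dots> = (if i = j \<and> i \<in> {1..<n} then 1 else 0)"
      by (cases "i = j") (auto simp: sum.delta')
    finally show ?thesis .
  qed
  have c: "complex_of_real s * complex_of_real s + complex_of_real t * complex_of_real t = 1"
          "complex_of_real t * complex_of_real t + complex_of_real s * complex_of_real s = 1"
    using st by (simp_all add: power2_eq_square flip: of_real_mult of_real_add)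
  have "(\<Sum>k<n+1. Rm n s t i k * cnj (Rm n s t j k)) =
     Rm n s t i 0 * cnj (Rm n s t j 0) + Rm n s t i n * cnj (Rm n s t j n) + (if i = j \<and> i \<in> {1..<n} then 1 else 0)"
    unfolding U using n by (subst sum.insert, simp, simp, subst sum.insert, simp, simp, simp only: inner add.assoc)
  also have "\<dots> = (if i = j then 1 else 0)"
    using n i j c by (auto simp: Rm_def)
  finally show ?thesis .
qed

lemma Rm_det:
  assumes n: "n \<ge> 1" and st: "s\<^sup>2 + t\<^sup>2 = 1"
  shows "mat_det (n+1) (Rm n s t) = 1"
proof -
  define T where "T = Transposition.transpose (0::nat) n"
  define P where "P = {p. p permutes {..<n+1}}"
  define f where "f p = of_int (sign p) * (\<Prod>i<n+1. Rm n s t i (p i))" for p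
  have U: "{..<n+1} = insert 0 (insert n {1..<n})" using n by auto
  have sub: "{id, T} \<subseteq> P" unfolding P_def T_def
    using n by (auto intro: permutes_id permutes_swap_id)
  have fin: "finite P" unfolding P_def by (rule finite_permutations) simp
  have zero: "f p = 0" if pP: "p \<in> P - {id, T}" for p
  proof (rule ccontr)
    assume "f p \<noteq> 0"
    hence pz: "(\<Prod>i<n+1. Rm n s t i (p i)) \<noteq> 0" unfolding f_def by auto
    have nz: "\<And>i. i < n+1 \<Longrightarrow> Rm n s t i (p i) \<noteq> 0"
      using pz by (metis finite_lessThan lessThan_iff prod_zero_iff)
    have perm: "p permutes {..<n+1}" using pP P_def by auto
    have mid: "p i = i" if "0 < i" "i < n" for i
      using nz[of i] that by (auto simp: Rm_def split: if_splits)
    have out: "p i = i" if "i \<ge> n+1" for i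
      using permutes_not_in[OF perm] that by auto
    have p0: "p 0 = 0 \<or> p 0 = n" using nz[of 0] n by (auto simp: Rm_def split: if_splits)
    have pn: "p n = 0 \<or> p n = n" using nz[of n] n by (auto simp: Rm_def split: if_splits)
    have inj: "inj p" using permutes_inj[OF perm] .
    show False
    proof (cases "p 0 = 0")
      case True
      hence "p n = n" using pn inj n by (metis inj_eq)
      have "p = id"
      proof (rule ext)
        fix x show "p x = id x"
          using True \<open>p n = n\<close> mid[of x] out[of x]
          by (cases "x = 0"; cases "x = n"; cases "x < n"; auto)
      qed
      thus False using pP by auto
    next
      case False
      hence a: "p 0 = n" using p0 by auto
      hence b: "p n = 0" using pn inj n by (metis inj_eq)
      have "p = T" unfolding T_def
      proof (rule ext)
        fix x show "p x = Transposition.transpose 0 n x"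
          using a b mid[of x] out[of x] n
          by (cases "x = 0"; cases "x = n"; cases "x < n"; auto simp: transpose_apply_other)
      qed
      thus False using pP by auto
    qed
  qed
  have "mat_det (n+1) (Rm n s t) = sum f P" unfolding mat_det_def f_def P_def by simp
  also have "\<dots> = sum f {id, T}"
    by (rule sum.mono_neutral_right[OF fin sub]) (use zero in auto)
  also have "T \<noteq> id" using n unfolding T_def by (metis id_apply not_one_le_zero transpose_apply_first)
  hence "sum f {id, T} = f id + f T" by simp
  also have "f id = of_real t * of_real t"
  proof -
    have "(\<Prod>i\<in>{1..<n}. Rm n s t i i) = 1" by (rule prod.neutral) (auto simp: Rm_def)
    thus ?thesis unfolding f_def U using n by (simp add: Rm_def)
  qed
  also have "f T = of_real s * of_real s"
  proof -
    have "(\<Prod>i\<in>{1..<n}. Rm n s t i (T i)) = 1" by (rule prod.neutral) (auto simp: Rm_def T_def)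
    moreover have "sign T = -1" using n unfolding T_def by (simp add: sign_swap_id)
    ultimately show ?thesis unfolding f_def U using n by (simp add: Rm_def T_def)
  qed
  also have "of_real t * of_real t + of_real s * of_real s = (1::complex)"
    using st by (simp add: power2_eq_square flip: of_real_mult of_real_add)
  finally show ?thesis .
qed
lemma core:
  fixes p q :: real
  assumes q0: "0 \<le> q" and qp: "q \<le> p" and p0: "0 < p" and pq: "p\<^sup>2 + q\<^sup>2 \<le> 1"
  defines "r \<equiv> sqrt (p\<^sup>2 + q\<^sup>2)"
  shows "p^a * q^b \<le> 2 * ((p/r)^(a+1) * (q/r)^b) \<and> (p/r)\<^sup>2 + (q/r)\<^sup>2 = 1 \<and> p/r \<ge> 0 \<and> q/r \<ge> 0"
proof -
  have rp: "0 < r" unfolding r_def using p0 by (simp add: add_pos_nonneg)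
  have r1: "r \<le> 1" unfolding r_def using pq by simp
  have r2: "r\<^sup>2 = p\<^sup>2 + q\<^sup>2" unfolding r_def by simp
  have pos: "0 < p\<^sup>2 + q\<^sup>2" using p0 by (simp add: add_pos_nonneg)
  have norm: "(p/r)\<^sup>2 + (q/r)\<^sup>2 = 1" using pos p0 by (simp add: power_divide r2 flip: add_divide_distrib)
  define s where "s = p/r"
  define t where "t = q/r"
  have s0: "s \<ge> 0" "t \<ge> 0" unfolding s_def t_def using rp p0 q0 by auto
  have pr: "p \<le> r" unfolding r_def by (rule real_le_rsqrt) simp
  have s1: "s \<le> 1" unfolding s_def using pr rp by simp
  have "q\<^sup>2 \<le> p\<^sup>2" using qp q0 by (simp add: power_mono)
  hence "1/2 \<le> s\<^sup>2" unfolding s_def using pos by (simp add: power_divide r2 le_divide_eq)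
  moreover have "s\<^sup>2 \<le> s" using s0 s1 by (simp add: power2_eq_square mult_left_le)
  ultimately have s2: "1 \<le> 2 * s" by simp
  have st: "s^a * t^b = p^a * q^b / r^(a+b)" unfolding s_def t_def by (simp add: power_divide power_add)
  have rab: "r^(a+b) \<le> 1" "0 < r^(a+b)" using rp r1 by (auto simp: power_le_one)
  have x0: "0 \<le> p^a * q^b" using p0 q0 by simp
  have "p^a * q^b \<le> p^a * q^b / r^(a+b)"
    using rab x0 by (simp add: le_divide_eq mult_left_le)
  also have "\<dots> = s^a * t^b" using st by simp
  also have "\<dots> \<le> (2 * s) * (s^a * t^b)" using mult_right_mono[OF s2, of "s^a * t^b"] s0 by simp
  also have "\<dots> = 2 * (s^(a+1) * t^b)" by (simp add: algebra_simps)
  finally show ?thesis using norm s0 unfolding s_def t_def by simp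
qed

lemma swap_le:
  fixes u v :: real
  assumes "0 \<le> u" "u \<le> v" "b \<le> a"
  shows "u^a * v^b \<le> v^a * u^b"
proof -
  have "u^a * v^b = u^(a-b) * (u * v)^b" using assms by (simp add: power_mult_distrib power_add[symmetric])
  also have "\<dots> \<le> v^(a-b) * (u * v)^b" using assms by (intro mult_right_mono power_mono) auto
  also have "\<dots> = v^a * u^b" using assms by (simp add: power_mult_distrib power_add[symmetric] mult.commute)
  finally show ?thesis .
qed

lemma pick:
  fixes u v :: real
  assumes u0: "0 \<le> u" and v0: "0 \<le> v" and uv: "u\<^sup>2 + v\<^sup>2 \<le> 1" and ba: "b \<le> a"
  shows "\<exists>s t. 0 \<le> s \<and> 0 \<le> t \<and> s\<^sup>2 + t\<^sup>2 = 1 \<and> u^a * v^b \<le> 2 * (s^(a+1) * t^b)"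
proof (cases "u = 0 \<and> v = 0")
  case True
  show ?thesis
  proof (intro exI conjI)
    show "u^a * v^b \<le> 2 * (1^(a+1) * (0::real)^b)"
      using True ba by (cases "b = 0"; cases "a = 0") (auto simp: power_0_left)
  qed auto
next
  case False
  define p where "p = max u v"
  define q where "q = min u v"
  have "0 < p" using False u0 v0 unfolding p_def by (auto simp: max_def)
  moreover have "0 \<le> q" "q \<le> p" "p\<^sup>2 + q\<^sup>2 \<le> 1" using u0 v0 uv unfolding p_def q_def
    by (auto simp: max_def min_def add.commute)
  moreover have "u^a * v^b \<le> p^a * q^b"
    using swap_le[of u v b a] u0 v0 ba unfolding p_def q_def by (auto simp: max_def min_def)
  ultimately show ?thesis using core[of q p a b] by (meson order_trans)
qed

lemma Rm_SU: assumes n: "n \<ge> 1" and st: "s\<^sup>2 + t\<^sup>2 = 1" shows "Rm n s t \<in> SU (n+1)"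
  unfolding SU_def
proof (intro CollectI conjI)
  show "\<forall>i j. (n+1 \<le> i \<or> n+1 \<le> j) \<longrightarrow> Rm n s t i j = 0" by (auto simp: Rm_def)
  show "\<forall>i<n+1. \<forall>j<n+1. (\<Sum>k<n+1. Rm n s t i k * cnj (Rm n s t j k)) = (if i = j then 1 else 0)"
    using n st by (intro allI impI Rm_orth)
  show "mat_det (n+1) (Rm n s t) = 1" using n st by (rule Rm_det)
qed

lemma SU_row:
  assumes n: "n \<ge> 1" and A: "A \<in> SU (n+1)"
  shows "(cmod (A n 0))\<^sup>2 + (cmod (A n n))\<^sup>2 \<le> 1"
proof -
  have "(\<Sum>k<n+1. A n k * cnj (A n k)) = 1" using A unfolding SU_def by auto
  hence "(\<Sum>k<n+1. complex_of_real ((cmod (A n k))\<^sup>2)) = 1" by (simp only: complex_norm_square)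
  hence R: "(\<Sum>k<n+1. (cmod (A n k))\<^sup>2) = 1" by (metis of_real_sum of_real_eq_1_iff)
  have "(\<Sum>k\<in>{0,n}. (cmod (A n k))\<^sup>2) \<le> (\<Sum>k<n+1. (cmod (A n k))\<^sup>2)"
    by (rule sum_mono2) auto
  thus ?thesis using R n by simp
qed

lemma bmon_norm: "cmod (bmon n (a,b) A) = cmod (A n 0)^a * cmod (A n n)^b"
  by (simp add: bmon_def yfun_def zfun_def norm_mult norm_power)

lemma bmon_le1:
  assumes n: "n \<ge> 1" and A: "A \<in> SU (n+1)"
  shows "cmod (bmon n g A) \<le> 1"
proof -
  obtain a b where g: "g = (a,b)" by (cases g)
  have r: "(cmod (A n 0))\<^sup>2 + (cmod (A n n))\<^sup>2 \<le> 1" by (rule SU_row[OF n A])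
  have "(cmod (A n 0))\<^sup>2 \<le> 1" "(cmod (A n n))\<^sup>2 \<le> 1"
    using r zero_le_power2[of "cmod (A n n)"] zero_le_power2[of "cmod (A n 0)"] by linarith+
  hence "cmod (A n 0) \<le> 1" "cmod (A n n) \<le> 1" by (simp_all add: abs_square_le_1)
  thus ?thesis unfolding g bmon_norm by (simp add: mult_le_one power_le_one)
qed

lemma bdd_bmon: "n \<ge> 1 \<Longrightarrow> bdd_above ((\<lambda>A. cmod (bmon n g A)) ` SU (n+1))"
  by (rule bdd_aboveI2[where M=1]) (rule bmon_le1)

lemma ratio:
  assumes n: "n \<ge> 1" and K: "0 \<le> K"
    and H: "\<And>u v. 0 \<le> u \<Longrightarrow> 0 \<le> v \<Longrightarrow> u\<^sup>2 + v\<^sup>2 \<le> 1 \<Longrightarrow>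
              \<exists>s t. 0 \<le> s \<and> 0 \<le> t \<and> s\<^sup>2 + t\<^sup>2 = 1 \<and> u^a * v^b \<le> K * (s^a' * t^b')"
  shows "supnorm (n+1) (bmon n (a,b)) / supnorm (n+1) (bmon n (a',b')) \<le> K"
proof -
  have ne: "SU (n+1) \<noteq> {}" using Rm_SU[of n 1 0] n by auto
  define D where "D = supnorm (n+1) (bmon n (a',b'))"
  have Dge: "s^a' * t^b' \<le> D" if "0 \<le> s" "0 \<le> t" "s\<^sup>2 + t\<^sup>2 = 1" for s t
  proof -
    have "cmod (bmon n (a',b') (Rm n s t)) = s^a' * t^b'"
      using n that unfolding bmon_norm by (simp add: Rm_def)
    moreover have "cmod (bmon n (a',b') (Rm n s t)) \<le> D"
      unfolding D_def supnorm_def by (rule cSUP_upper[OF Rm_SU[OF n that(3)] bdd_bmon[OF n]])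
    ultimately show ?thesis by simp
  qed
  have d1: "(1::real)^a' * 0^b' \<le> D" by (rule Dge) simp_all
  have d2: "0 \<le> (1::real)^a' * 0^b'" by simp
  have D0: "0 \<le> D" using d1 d2 by linarith
  have ND: "supnorm (n+1) (bmon n (a,b)) \<le> K * D"
    unfolding supnorm_def
  proof (rule cSUP_least[OF ne])
    fix A assume A: "A \<in> SU (n+1)"
    obtain s t where st: "0 \<le> s" "0 \<le> t" "s\<^sup>2 + t\<^sup>2 = 1"
      and le: "cmod (A n 0)^a * cmod (A n n)^b \<le> K * (s^a' * t^b')"
      using H[OF norm_ge_zero norm_ge_zero SU_row[OF n A]] by blast
    have "K * (s^a' * t^b') \<le> K * D" using Dge[OF st] K by (rule mult_left_mono)
    thus "cmod (bmon n (a,b) A) \<le> K * D" using le unfolding bmon_norm by simp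
  qed
  show ?thesis
  proof (cases "D = 0")
    case True thus ?thesis using K by (simp add: D_def)
  next
    case False
    hence "0 < D" using D0 by simp
    thus ?thesis using ND by (simp add: D_def pos_divide_le_eq)
  qed
qed

lemma H1:
  fixes u v :: real
  assumes "0 \<le> u" "0 \<le> v" "u\<^sup>2 + v\<^sup>2 \<le> 1"
  shows "\<exists>s t. 0 \<le> s \<and> 0 \<le> t \<and> s\<^sup>2 + t\<^sup>2 = 1 \<and> u^a * v^a \<le> 2 * (s^(a+1) * t^(a+1))"
proof (intro exI conjI)
  let ?s = "sqrt (1/2) :: real"
  show "0 \<le> ?s" by simp
  show "?s\<^sup>2 + ?s\<^sup>2 = 1" by simp
  have d1: "0 \<le> (u - v)\<^sup>2" by simp
  have d2: "(u - v)\<^sup>2 = u\<^sup>2 - 2 * u * v + v\<^sup>2" by (simp add: power2_diff)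
  have uv: "u * v \<le> 1/2" using assms(3) d1 d2 by linarith
  have "u^a * v^a = (u * v)^a" by (simp add: power_mult_distrib)
  also have "\<dots> \<le> (1/2)^a" using uv assms by (intro power_mono) auto
  also have "\<dots> = 2 * (?s^(a+1) * ?s^(a+1))"
  proof -
    have h: "?s * ?s = 1/2" by (simp add: real_sqrt_mult_self)
    have "?s^(a+1) * ?s^(a+1) = (?s * ?s)^(a+1)" by (rule power_mult_distrib[symmetric])
    hence "?s^(a+1) * ?s^(a+1) = (1/2)^(a+1)" by (simp only: h)
    thus ?thesis by simp
  qed
  finally show "u^a * v^a \<le> 2 * (?s^(a+1) * ?s^(a+1))" .
qed simp

lemma case1:
  assumes n: "n \<ge> 1"
  shows "supnorm (n+1) (bmon n (g, g)) / supnorm (n+1) (bmon n (g + 1, g + 1)) \<le> 2"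
proof (rule ratio[OF n])
  fix u v :: real assume uv: "0 \<le> u" "0 \<le> v" "u\<^sup>2 + v\<^sup>2 \<le> 1"
  show "\<exists>s t. 0 \<le> s \<and> 0 \<le> t \<and> s\<^sup>2 + t\<^sup>2 = 1 \<and> u^g * v^g \<le> 2 * (s^(g+1) * t^(g+1))"
    by (rule H1[OF uv])
qed simp

lemma case2:
  assumes n: "n \<ge> 1" and le: "g2 \<le> g1"
  shows "supnorm (n+1) (bmon n (g1, g2)) / supnorm (n+1) (bmon n (g1 + 1, g2)) \<le> 2"
proof (rule ratio[OF n])
  fix u v :: real assume uv: "0 \<le> u" "0 \<le> v" "u\<^sup>2 + v\<^sup>2 \<le> 1"
  show "\<exists>s t. 0 \<le> s \<and> 0 \<le> t \<and> s\<^sup>2 + t\<^sup>2 = 1 \<and> u^g1 * v^g2 \<le> 2 * (s^(g1+1) * t^g2)"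
    by (rule pick[OF uv le])
qed simp

lemma case3:
  assumes n: "n \<ge> 1" and le: "g1 \<le> g2"
  shows "supnorm (n+1) (bmon n (g1, g2)) / supnorm (n+1) (bmon n (g1, g2 + 1)) \<le> 2"
proof (rule ratio[OF n])
  fix u v :: real assume uv: "0 \<le> u" "0 \<le> v" "u\<^sup>2 + v\<^sup>2 \<le> 1"
  have vu: "v\<^sup>2 + u\<^sup>2 \<le> 1" using uv(3) by (simp add: add.commute)
  obtain s t where st: "0 \<le> s" "0 \<le> t" "s\<^sup>2 + t\<^sup>2 = 1" and le2: "v^g2 * u^g1 \<le> 2 * (s^(g2+1) * t^g1)"
    using pick[OF uv(2) uv(1) vu le] by blast
  have e1: "u^g1 * v^g2 = v^g2 * u^g1" by (rule mult.commute)
  have e2: "t^g1 * s^(g2+1) = s^(g2+1) * t^g1" by (rule mult.commute)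
  have e3: "t\<^sup>2 + s\<^sup>2 = 1" using st(3) by simp
  have X: "0 \<le> t \<and> 0 \<le> s \<and> t\<^sup>2 + s\<^sup>2 = 1 \<and> u^g1 * v^g2 \<le> 2 * (t^g1 * s^(g2+1))"
    using st(1,2) e3 le2 by (simp only: e1 e2)
  show "\<exists>s t. 0 \<le> s \<and> 0 \<le> t \<and> s\<^sup>2 + t\<^sup>2 = 1 \<and> u^g1 * v^g2 \<le> 2 * (s^g1 * t^(g2+1))"
    by (rule exI[where x=t], rule exI[where x=s], rule X)
qed simp

theorem lemma3p3:
  fixes n :: nat
  assumes "n \<ge> 1"
  shows "bdd_above {supnorm (n+1) (bmon n (g1, g2)) / supnorm (n+1) (bmon n (g1 + 1, g2 + 1)) | g1 g2. g1 = g2}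
       \<and> bdd_above {supnorm (n+1) (bmon n (g1, g2)) / supnorm (n+1) (bmon n (g1 + 1, g2)) | g1 g2. g1 \<ge> g2}
       \<and> bdd_above {supnorm (n+1) (bmon n (g1, g2)) / supnorm (n+1) (bmon n (g1, g2 + 1)) | g1 g2. g1 \<le> g2}"
proof (intro conjI)
  show "bdd_above {supnorm (n+1) (bmon n (g1, g2)) / supnorm (n+1) (bmon n (g1 + 1, g2 + 1)) | g1 g2. g1 = g2}"
  proof (rule bdd_aboveI[where M=2])
    fix x assume "x \<in> {supnorm (n+1) (bmon n (g1, g2)) / supnorm (n+1) (bmon n (g1 + 1, g2 + 1)) | g1 g2. g1 = g2}"
    then obtain g where "x = supnorm (n+1) (bmon n (g, g)) / supnorm (n+1) (bmon n (g + 1, g + 1))" by blast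
    thus "x \<le> 2" using case1[OF assms, of g] by simp
  qed
  show "bdd_above {supnorm (n+1) (bmon n (g1, g2)) / supnorm (n+1) (bmon n (g1 + 1, g2)) | g1 g2. g1 \<ge> g2}"
  proof (rule bdd_aboveI[where M=2])
    fix x assume "x \<in> {supnorm (n+1) (bmon n (g1, g2)) / supnorm (n+1) (bmon n (g1 + 1, g2)) | g1 g2. g1 \<ge> g2}"
    then obtain g1 g2 where "x = supnorm (n+1) (bmon n (g1, g2)) / supnorm (n+1) (bmon n (g1 + 1, g2))" "g2 \<le> g1" by blast
    thus "x \<le> 2" using case2[OF assms, of g2 g1] by simp
  qed
  show "bdd_above {supnorm (n+1) (bmon n (g1, g2)) / supnorm (n+1) (bmon n (g1, g2 + 1)) | g1 g2. g1 \<le> g2}"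
  proof (rule bdd_aboveI[where M=2])
    fix x assume "x \<in> {supnorm (n+1) (bmon n (g1, g2)) / supnorm (n+1) (bmon n (g1, g2 + 1)) | g1 g2. g1 \<le> g2}"
    then obtain g1 g2 where "x = supnorm (n+1) (bmon n (g1, g2)) / supnorm (n+1) (bmon n (g1, g2 + 1))" "g1 \<le> g2" by blast
    thus "x \<le> 2" using case3[OF assms, of g1 g2] by simp
  qed
qed

end
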